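(* Let $R$ be a Galois ring of odd characteristic. Then every pure subgroup $K\le R^\times$ is strongly pure.
   Context: All rings have an identity. A finite local commutative ring $R$ with maximal ideal $\mathrm{rad}(R)$ and residue field of characteristic $p$ is a Galois ring if $\mathrm{rad}(R)=pR$. $K\le R^\times$ is pure if the only ideal $I$ of $R$ with $1+I\subseteq K$ is $\{0\}$. With $I_0=\{x\in\mathrm{rad}(R):x\,\mathrm{rad}(R)=\{0\}\}$ and $\pi_0:R\to R/I_0$ the natural epimorphism, $K$ is strongly pure if it is pure and, unless $R$ is a field, $\pi_0(K)$ is a strongly pure subgroup of $(R/I_0)^\times$ (recursive definition). *)

theory Defs
  imports "HOL-Algebra.Algebra"
begin

definition rad :: "('a, 'b) ring_scheme \<Rightarrow> 'a set" where
  "rad R = {x \<in> carrier R. \<forall>I. maximalideal I R \<longrightarrow> x \<in> I}"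

definition finite_local_cring :: "('a, 'b) ring_scheme \<Rightarrow> bool" where
  "finite_local_cring R \<longleftrightarrow> cring R \<and> finite (carrier R) \<and> (\<exists>!I. maximalideal I R)"

definition alg_ring_char :: "('a, 'b) ring_scheme \<Rightarrow> nat" where
  "alg_ring_char R = (if \<exists>n::nat>0. add_pow R n \<one>\<^bsub>R\<^esub> = \<zero>\<^bsub>R\<^esub>
                  then LEAST n::nat. n > 0 \<and> add_pow R n \<one>\<^bsub>R\<^esub> = \<zero>\<^bsub>R\<^esub> else 0)"

definition residue_char :: "('a, 'b) ring_scheme \<Rightarrow> nat" where
  "residue_char R = alg_ring_char (R Quot rad R)"

definition galois_ring :: "('a, 'b) ring_scheme \<Rightarrow> bool" where
  "galois_ring R \<longleftrightarrow> finite_local_cring R \<and>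
     rad R = {add_pow R (residue_char R) x | x. x \<in> carrier R}"

definition pure :: "('a, 'b) ring_scheme \<Rightarrow> 'a set \<Rightarrow> bool" where
  "pure R K \<longleftrightarrow> subgroup K (units_of R) \<and>
     (\<forall>I. ideal I R \<and> (\<forall>x\<in>I. \<one>\<^bsub>R\<^esub> \<oplus>\<^bsub>R\<^esub> x \<in> K) \<longrightarrow> I = {\<zero>\<^bsub>R\<^esub>})"

definition I0 :: "('a, 'b) ring_scheme \<Rightarrow> 'a set" where
  "I0 R = {x \<in> rad R. \<forall>y \<in> rad R. x \<otimes>\<^bsub>R\<^esub> y = \<zero>\<^bsub>R\<^esub>}"

definition pi0_image :: "('a, 'b) ring_scheme \<Rightarrow> 'a set \<Rightarrow> 'a set set" where
  "pi0_image R K = (\<lambda>k. I0 R +>\<^bsub>R\<^esub> k) ` K"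

(* Since HOL types cannot grow along the recursion, the quotient R/I_0 is
   replaced by an isomorphic copy S living in the same type (the notions are invariant
   under ring isomorphism, and such a copy always exists since |R/I_0| \<le> |R|). *)
inductive strongly_pure :: "'a ring \<Rightarrow> 'a set \<Rightarrow> bool" where
  sp_field: "pure R K \<Longrightarrow> field R \<Longrightarrow> strongly_pure R K"
| sp_step: "pure R K \<Longrightarrow> \<not> field R \<Longrightarrow> h \<in> ring_iso (R Quot I0 R) S \<Longrightarrow>
            strongly_pure S (h ` pi0_image R K) \<Longrightarrow> strongly_pure R K"

end

theory Submission
  imports Defs
begin
lemma (in cring) not_unit_mult:
  assumes "t \<in> carrier R" "t \<notin> Units R" "y \<in> carrier R"
  shows "t \<otimes> y \<notin> Units R"
  using assms unit_factor by blast

lemma (in cring) nilp_not_unit: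
  assumes "t \<in> carrier R" "t [^] (n::nat) = \<zero>" "\<one> \<noteq> \<zero>"
  shows "t \<notin> Units R"
proof
  assume "t \<in> Units R"
  then have "t [^] n \<in> Units R" by (rule Units_pow_closed)
  then have "\<zero> \<in> Units R" using assms by simp
  then obtain y where "y \<in> carrier R" "\<zero> \<otimes> y = \<one>" unfolding Units_def by blast
  then show False using assms by simp
qed

lemma (in cring) decomp:
  assumes t: "t \<in> carrier R" and nil: "t [^] (n::nat) = \<zero>"
    and UM: "\<forall>x\<in>carrier R. x \<in> Units R \<or> (\<exists>y\<in>carrier R. x = t \<otimes> y)"
    and x: "x \<in> carrier R" "x \<noteq> \<zero>"
  shows "\<exists>k::nat. \<exists>u\<in>Units R. x = t [^] k \<otimes> u"
proof -
  have P: "(\<exists>k::nat. \<exists>u\<in>Units R. x = t [^] k \<otimes> u) \<or> (\<exists>y\<in>carrier R. x = t [^] m \<otimes> y)" for m :: nat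
  proof (induct m)
    case 0
    then show ?case using x by auto
  next
    case (Suc m)
    then show ?case
    proof
      assume "\<exists>y\<in>carrier R. x = t [^] m \<otimes> y"
      then obtain y where y: "y \<in> carrier R" "x = t [^] m \<otimes> y" by blast
      show ?case
      proof (cases "y \<in> Units R")
        case True then show ?thesis using y by blast
      next
        case False
        then obtain y' where y': "y' \<in> carrier R" "y = t \<otimes> y'" using UM y by blast
        have "x = t [^] Suc m \<otimes> y'" using y y' t by (simp add: m_assoc)
        then show ?thesis using y' by blast
      qed
    qed simp
  qed
  from P[of n] show ?thesis
  proof
    assume "\<exists>y\<in>carrier R. x = t [^] n \<otimes> y"
    then obtain y where "y \<in> carrier R" "x = t [^] n \<otimes> y" by blast
    then have "x = \<zero>" using nil by simp
    then show ?thesis using x by blast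
  qed
qed


lemma (in cring) pidl_mem: "t \<in> carrier R \<Longrightarrow> x \<in> PIdl t \<longleftrightarrow> (\<exists>y\<in>carrier R. x = t \<otimes> y)"
  unfolding cgenideal_def using m_comm by blast

lemma (in cring) unit_ideal:
  assumes "ideal J R" "j \<in> J" "j \<in> Units R"
  shows "J = carrier R"
proof -
  have "inv j \<otimes> j \<in> J" using assms ideal.I_l_closed by (metis Units_inv_closed)
  then have "\<one> \<in> J" using assms by simp
  then show ?thesis using assms ideal.one_imp_carrier by blast
qed

lemma (in cring) one_not_tmult:
  assumes "t \<in> carrier R" "t \<notin> Units R" "y \<in> carrier R"
  shows "\<one> \<noteq> t \<otimes> y"
proof
  assume "\<one> = t \<otimes> y"
  then have "t \<otimes> y \<in> Units R" by (metis Units_one_closed)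
  then show False using assms unit_factor by blast
qed

lemma (in cring) rad_struct:
  assumes t: "t \<in> carrier R" and tn: "t \<notin> Units R"
    and UM: "\<forall>x\<in>carrier R. x \<in> Units R \<or> (\<exists>y\<in>carrier R. x = t \<otimes> y)"
  shows "maximalideal (PIdl t) R" and "\<And>M. maximalideal M R \<Longrightarrow> M = PIdl t"
    and "rad R = PIdl t"
proof -
  have idl: "ideal (PIdl t) R" using cgenideal_ideal t by blast
  have one: "\<one> \<notin> PIdl t" using pidl_mem[OF t] one_not_tmult[OF t tn] by blast
  show max: "maximalideal (PIdl t) R"
  proof (rule maximalidealI[OF idl])
    show "carrier R \<noteq> PIdl t" using one by blast
  next
    fix J assume J: "ideal J R" "PIdl t \<subseteq> J" "J \<subseteq> carrier R"
    show "J = PIdl t \<or> J = carrier R"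
    proof (cases "J \<subseteq> PIdl t")
      case True then show ?thesis using J by blast
    next
      case False
      then obtain j where j: "j \<in> J" "j \<notin> PIdl t" by blast
      then have "j \<in> Units R" using UM J pidl_mem[OF t] by blast
      then show ?thesis using unit_ideal J j by blast
    qed
  qed
  show uniq: "M = PIdl t" if M: "maximalideal M R" for M
  proof -
    interpret M: maximalideal M R by fact
    have "M \<subseteq> PIdl t"
    proof
      fix x assume x: "x \<in> M"
      have "x \<notin> Units R" using unit_ideal[OF M.is_ideal x] M.I_notcarr by blast
      then show "x \<in> PIdl t" using UM pidl_mem[OF t] x M.a_subset by blast
    qed
    moreover have "PIdl t \<subseteq> carrier R"
      using additive_subgroup.a_subset[OF ideal.axioms(1)[OF idl]] .
    ultimately have "PIdl t = M \<or> PIdl t = carrier R"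
      using M.I_maximal[OF idl] by blast
    then show ?thesis using one by blast
  qed
  have sub: "PIdl t \<subseteq> carrier R"
      using additive_subgroup.a_subset[OF ideal.axioms(1)[OF idl]] .
  show "rad R = PIdl t"
  proof
    show "rad R \<subseteq> PIdl t" unfolding rad_def using max by blast
    show "PIdl t \<subseteq> rad R" unfolding rad_def using sub uniq by blast
  qed
qed

lemma (in cring) I0_struct:
  assumes t: "t \<in> carrier R" and tn: "t \<notin> Units R"
    and UM: "\<forall>x\<in>carrier R. x \<in> Units R \<or> (\<exists>y\<in>carrier R. x = t \<otimes> y)"
    and N: "t [^] N \<noteq> \<zero>" "t [^] Suc N = \<zero>" "N \<ge> 1"
  shows "I0 R = PIdl (t [^] N)"
proof -
  have rad: "rad R = PIdl t" using rad_struct[OF t tn UM] by blast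
  have tN: "t [^] N \<in> carrier R" using t by simp
  show ?thesis
  proof
    show "I0 R \<subseteq> PIdl (t [^] N)"
    proof
      fix x assume x: "x \<in> I0 R"
      then have xr: "x \<in> PIdl t" and xa: "\<forall>y\<in>PIdl t. x \<otimes> y = \<zero>"
        unfolding I0_def rad by auto
      have xc: "x \<in> carrier R" using xr t unfolding pidl_mem[OF t] by auto
      have "t = t \<otimes> \<one>" using t by simp
      then have "t \<in> PIdl t" unfolding pidl_mem[OF t] using one_closed by blast
      then have xt: "x \<otimes> t = \<zero>" using xa by blast
      show "x \<in> PIdl (t [^] N)"
      proof (cases "x = \<zero>")
        case True
        have "\<zero> = t [^] N \<otimes> \<zero>" using tN by simp
        then show ?thesis unfolding pidl_mem[OF tN] using True zero_closed by blast
      next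
        case False
        have nil: "t [^] (Suc N) = \<zero>" using N by blast
        obtain k :: nat and u where ku: "u \<in> Units R" "x = t [^] k \<otimes> u"
          using decomp[OF t nil UM xc False] by blast
        have uc: "u \<in> carrier R" using ku by blast
        have tk: "t [^] k \<in> carrier R" using t by simp
        have "x \<otimes> t = t [^] k \<otimes> (u \<otimes> t)" using ku tk t uc by (simp add: m_assoc)
        also have "\<dots> = t [^] k \<otimes> (t \<otimes> u)" using t uc by (simp add: m_comm)
        also have "\<dots> = t [^] Suc k \<otimes> u" using tk t uc by (simp add: m_assoc)
        finally have "t [^] Suc k \<otimes> u = x \<otimes> t" by simp
        then have e: "t [^] Suc k \<otimes> u = \<zero>" using xt by simp
        have iu: "inv u \<in> carrier R" "u \<otimes> inv u = \<one>" using ku by auto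
        have "t [^] Suc k = t [^] Suc k \<otimes> (u \<otimes> inv u)" using iu t by simp
        also have "\<dots> = (t [^] Suc k \<otimes> u) \<otimes> inv u" using iu t uc
          by (simp add: m_assoc del: nat_pow_Suc)
        also have "\<dots> = \<zero>" using e iu by simp
        finally have tk: "t [^] Suc k = \<zero>" .
        have "N \<le> k"
        proof (rule ccontr)
          assume "\<not> N \<le> k"
          then have "Suc k \<le> N" by simp
          then obtain d where eq: "N = Suc k + d" using le_Suc_ex by blast
          have "t [^] N = t [^] Suc k \<otimes> t [^] d"
            using t by (simp only: eq nat_pow_mult)
          also have "\<dots> = \<zero>" using tk t by simp
          finally show False using N by blast
        qed
        then obtain d where eq: "k = N + d" using le_Suc_ex by blast
        have "x = t [^] (N + d) \<otimes> u" using ku eq by simp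
        also have "\<dots> = (t [^] N \<otimes> t [^] d) \<otimes> u"
          using nat_pow_mult[OF t, of N d] by simp
        also have "\<dots> = t [^] N \<otimes> (t [^] d \<otimes> u)"
          using t uc by (simp add: m_assoc)
        moreover have "t [^] d \<otimes> u \<in> carrier R" using t uc by simp
        ultimately show ?thesis unfolding pidl_mem[OF tN] by blast
      qed
    qed
  next
    show "PIdl (t [^] N) \<subseteq> I0 R"
    proof
      fix x assume "x \<in> PIdl (t [^] N)"
      then obtain c where c: "c \<in> carrier R" "x = t [^] N \<otimes> c" unfolding pidl_mem[OF tN] by blast
      obtain M where eqN: "N = Suc M" using N(3) by (metis Suc_pred' less_le_trans zero_less_one)
      have tN1: "t [^] N = t \<otimes> t [^] (N - 1)"
        using t by (simp add: eqN m_comm)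
      have "x = (t \<otimes> t [^] (N - 1)) \<otimes> c" by (simp only: c(2) tN1)
      also have "\<dots> = t \<otimes> (t [^] (N - 1) \<otimes> c)" using c t by (simp only: m_assoc nat_pow_closed)
      finally have "x = t \<otimes> (t [^] (N - 1) \<otimes> c)" .
      moreover have "t [^] (N - 1) \<otimes> c \<in> carrier R" using t c by simp
      ultimately have xr: "x \<in> rad R" unfolding rad pidl_mem[OF t] by blast
      have "x \<otimes> y = \<zero>" if "y \<in> rad R" for y
      proof -
        have "y \<in> PIdl t" using that rad by simp
        then obtain d where d: "d \<in> carrier R" "y = t \<otimes> d" unfolding pidl_mem[OF t] by blast
        have "x \<otimes> y = t [^] N \<otimes> (c \<otimes> (t \<otimes> d))" using c d t by (simp add: m_assoc)
        also have "\<dots> = t [^] N \<otimes> (t \<otimes> (c \<otimes> d))" using c d t by (simp add: m_lcomm)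
        also have "\<dots> = (t [^] N \<otimes> t) \<otimes> (c \<otimes> d)" using c d t by (simp add: m_assoc)
        also have "\<dots> = \<zero>" using N(2) t c d by simp
        finally show ?thesis .
      qed
      then show "x \<in> I0 R" unfolding I0_def using xr by blast
    qed
  qed
qed

lemma (in cring) addpow_one_mult:
  "((add_pow R (a::nat) \<one>)) \<otimes> ((add_pow R (b::nat) \<one>)) = (add_pow R (a * b) \<one>)"
proof -
  have "((add_pow R (a) \<one>)) \<otimes> ((add_pow R (b) \<one>)) = (add_pow R (a) (\<one> \<otimes> (add_pow R (b) \<one>)))"
    by (simp add: add_pow_ldistr)
  also have "\<dots> = (add_pow R (a) ((add_pow R (b) \<one>)))" by simp
  also have "\<dots> = (add_pow R (b * a) \<one>)" by (simp add: add.nat_pow_pow)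
  finally show ?thesis by (simp add: mult.commute)
qed

lemma (in cring) unit_cancel_zero:
  assumes "u \<in> Units R" "z \<in> carrier R" "u \<otimes> z = \<zero>"
  shows "z = \<zero>"
proof -
  have "z = (inv u \<otimes> u) \<otimes> z" using assms by (simp add: Units_closed)
  also have "\<dots> = inv u \<otimes> (u \<otimes> z)" by (rule m_assoc) (use assms in auto)
  also have "\<dots> = \<zero>" using assms by simp
  finally show ?thesis .
qed

lemma nat_tri: "Suc m * m div 2 = m * (m - 1) div 2 + m"
proof -
  have "Suc m * m = m * (m - 1) + 2 * m" by (cases m) (simp_all add: algebra_simps)
  then show ?thesis by simp
qed

lemma (in cring) pow_expand:
  assumes a: "a \<in> carrier R" and a3: "a \<otimes> a \<otimes> a = \<zero>"
  shows "(\<one> \<oplus> a) [^] (m::nat) = \<one> \<oplus> ((add_pow R (m) \<one>)) \<otimes> a \<oplus> ((add_pow R (m * (m - 1) div 2) \<one>)) \<otimes> (a \<otimes> a)"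
proof (induct m)
  case 0
  then show ?case using a by simp
next
  case (Suc m)
  define M where "M = (add_pow R (m) \<one>)"
  define C where "C = (add_pow R (m * (m - 1) div 2) \<one>)"
  have MC: "M \<in> carrier R" "C \<in> carrier R" unfolding M_def C_def by simp_all
  have "(\<one> \<oplus> a) [^] Suc m = (\<one> \<oplus> M \<otimes> a \<oplus> C \<otimes> (a \<otimes> a)) \<otimes> (\<one> \<oplus> a)"
    using Suc M_def C_def by simp
  also have "\<dots> = \<one> \<oplus> (M \<oplus> \<one>) \<otimes> a \<oplus> (C \<oplus> M) \<otimes> (a \<otimes> a) \<oplus> C \<otimes> (a \<otimes> a \<otimes> a)"
    using MC a by algebra
  also have "\<dots> = \<one> \<oplus> (M \<oplus> \<one>) \<otimes> a \<oplus> (C \<oplus> M) \<otimes> (a \<otimes> a)"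
    using MC a a3 by simp
  also have "M \<oplus> \<one> = (add_pow R (Suc m) \<one>)" unfolding M_def by (simp add: add.nat_pow_Suc)
  also have "C \<oplus> M = (add_pow R (m * (m - 1) div 2 + m) \<one>)"
    unfolding M_def C_def by (simp add: add.nat_pow_mult)
  also have "m * (m - 1) div 2 + m = Suc m * (Suc m - 1) div 2" using nat_tri[of m] by simp
  finally show ?case .
qed

lemma (in cring) pow_p:
  assumes a: "a \<in> carrier R" and a3: "a \<otimes> a \<otimes> a = \<zero>"
    and t: "t = (add_pow R (p::nat) \<one>)" and two: "(add_pow R (2::nat) \<one>) \<in> Units R"
    and ta: "t \<otimes> (a \<otimes> a) = \<zero>"
  shows "(\<one> \<oplus> a) [^] p = \<one> \<oplus> t \<otimes> a"
proof -
  define C where "C = (add_pow R (p * (p - 1) div 2) \<one>)"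
  have Cc: "C \<in> carrier R" unfolding C_def by simp
  have ev: "even (p * (p - 1))" by (cases "even p") auto
  have "(add_pow R (2::nat) \<one>) \<otimes> C = (add_pow R (p * (p - 1)) \<one>)"
    unfolding C_def using ev by (simp add: addpow_one_mult)
  also have "\<dots> = t \<otimes> (add_pow R (p - 1) \<one>)" using t by (simp add: addpow_one_mult)
  finally have e: "(add_pow R (2::nat) \<one>) \<otimes> C = t \<otimes> (add_pow R (p - 1) \<one>)" .
  have tc: "t \<in> carrier R" using t by simp
  have "(add_pow R (2::nat) \<one>) \<otimes> (C \<otimes> (a \<otimes> a)) = ((add_pow R (2::nat) \<one>) \<otimes> C) \<otimes> (a \<otimes> a)"
    using Cc a by (simp add: m_assoc)
  also have "\<dots> = (add_pow R (p - 1) \<one>) \<otimes> (t \<otimes> (a \<otimes> a))" unfolding e using tc a by (simp add: m_ac)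
  also have "\<dots> = \<zero>" using ta by simp
  finally have "C \<otimes> (a \<otimes> a) = \<zero>" using unit_cancel_zero[OF two] Cc a by simp
  then show ?thesis using pow_expand[OF a a3, of p] t a unfolding C_def by simp
qed

definition rep :: "'a set \<Rightarrow> 'a" where "rep C = (SOME x. x \<in> C)"

definition qring :: "('a, 'b) ring_scheme \<Rightarrow> ('a \<Rightarrow> 'a) \<Rightarrow> 'a ring" where
  "qring R f = \<lparr>carrier = f ` carrier R, Group.monoid.mult = (\<lambda>x y. f (x \<otimes>\<^bsub>R\<^esub> y)),
      Group.monoid.one = f \<one>\<^bsub>R\<^esub>, Ring.ring.zero = f \<zero>\<^bsub>R\<^esub>, Ring.ring.add = (\<lambda>x y. f (x \<oplus>\<^bsub>R\<^esub> y))\<rparr>"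

lemma (in cring) quot_copy:
  assumes I: "ideal I R"
  obtains S :: "'a ring" and phi :: "'a \<Rightarrow> 'a"
  where "rep \<in> ring_iso (R Quot I) S" "phi \<in> ring_hom R S" "cring S"
    "carrier S = phi ` carrier R"
    "\<And>a. a \<in> carrier R \<Longrightarrow> rep (I +> a) = phi a"
    "\<And>a b. a \<in> carrier R \<Longrightarrow> b \<in> carrier R \<Longrightarrow> phi a = phi b \<longleftrightarrow> a \<ominus> b \<in> I"
proof -
  define phi where "phi a = rep (I +> a)" for a
  define S :: "'a ring" where "S = qring R phi"
  have Isub: "I \<subseteq> carrier R" using I by (simp add: ideal.Icarr subsetI)
  have self: "a \<in> I +> a" if "a \<in> carrier R" for a
  proof -
    have "\<zero> \<in> I" using additive_subgroup.zero_closed[OF ideal.axioms(1)[OF I]] .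
    moreover have "a = \<zero> \<oplus> a" using that by simp
    ultimately show ?thesis unfolding a_r_coset_def' by blast
  qed
  have inC: "phi a \<in> I +> a" if "a \<in> carrier R" for a
    unfolding phi_def rep_def using self[OF that] by (rule someI)
  have decomp: "\<exists>h\<in>I. phi a = h \<oplus> a" if "a \<in> carrier R" for a
    using inC[OF that] unfolding a_r_coset_def' by blast
  have phic: "phi a \<in> carrier R" if "a \<in> carrier R" for a
    using decomp[OF that] that Isub by auto
  have coseq: "I +> phi a = I +> a" if a: "a \<in> carrier R" for a
  proof -
    obtain h where h: "h \<in> I" "phi a = h \<oplus> a" using decomp[OF a] by blast
    have hc: "h \<in> carrier R" using h Isub by auto
    have "phi a \<ominus> a = h" unfolding h(2) using hc a by algebra
    then have "phi a \<ominus> a \<in> I" using h by simp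
    then show ?thesis using quotient_eq_iff_same_a_r_cos[OF I phic[OF a] a] by simp
  qed
  have eqiff: "phi a = phi b \<longleftrightarrow> a \<ominus> b \<in> I" if a: "a \<in> carrier R" and b: "b \<in> carrier R" for a b
  proof
    assume "phi a = phi b"
    then have "I +> a = I +> b" using coseq[OF a] coseq[OF b] by metis
    then show "a \<ominus> b \<in> I" using quotient_eq_iff_same_a_r_cos[OF I a b] by simp
  next
    assume "a \<ominus> b \<in> I"
    then have "I +> a = I +> b" using quotient_eq_iff_same_a_r_cos[OF I a b] by simp
    then show "phi a = phi b" unfolding phi_def by simp
  qed
  have rh: "(+>) I \<in> ring_hom R (R Quot I)" using ideal.rcos_ring_hom[OF I] .
  have mulc: "phi (phi a \<otimes> phi b) = phi (a \<otimes> b)" if a: "a \<in> carrier R" and b: "b \<in> carrier R" for a b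
  proof -
    have "I +> (phi a \<otimes> phi b) = (I +> phi a) \<otimes>\<^bsub>R Quot I\<^esub> (I +> phi b)"
      using ring_hom_mult[OF rh phic[OF a] phic[OF b]] .
    also have "\<dots> = (I +> a) \<otimes>\<^bsub>R Quot I\<^esub> (I +> b)" using coseq a b by simp
    also have "\<dots> = I +> (a \<otimes> b)" using ring_hom_mult[OF rh a b] by simp
    finally show ?thesis unfolding phi_def by simp
  qed
  have addc: "phi (phi a \<oplus> phi b) = phi (a \<oplus> b)" if a: "a \<in> carrier R" and b: "b \<in> carrier R" for a b
  proof -
    have "I +> (phi a \<oplus> phi b) = (I +> phi a) \<oplus>\<^bsub>R Quot I\<^esub> (I +> phi b)"
      using ring_hom_add[OF rh phic[OF a] phic[OF b]] .
    also have "\<dots> = (I +> a) \<oplus>\<^bsub>R Quot I\<^esub> (I +> b)" using coseq a b by simp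
    also have "\<dots> = I +> (a \<oplus> b)" using ring_hom_add[OF rh a b] by simp
    finally show ?thesis unfolding phi_def by simp
  qed
  have hom: "phi \<in> ring_hom R S"
  proof (rule ring_hom_memI)
    show "phi x \<in> carrier S" if "x \<in> carrier R" for x using that unfolding S_def qring_def by simp
    show "phi (x \<otimes> y) = phi x \<otimes>\<^bsub>S\<^esub> phi y" if "x \<in> carrier R" "y \<in> carrier R" for x y
      using that mulc unfolding S_def qring_def by simp
    show "phi (x \<oplus> y) = phi x \<oplus>\<^bsub>S\<^esub> phi y" if "x \<in> carrier R" "y \<in> carrier R" for x y
      using that addc unfolding S_def qring_def by simp
    show "phi \<one> = \<one>\<^bsub>S\<^esub>" unfolding S_def qring_def by simp
  qed
  have "ring (S \<lparr> carrier := phi ` (carrier R), zero := phi \<zero> \<rparr>)"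
    using ring_hom_imp_img_ring[OF hom] .
  moreover have "S \<lparr> carrier := phi ` (carrier R), zero := phi \<zero> \<rparr> = S" unfolding S_def qring_def by simp
  ultimately have ringS: "ring S" by simp
  have crS: "cring S"
  proof -
    interpret S: ring S by (rule ringS)
    show ?thesis
    proof (unfold_locales)
      fix x y assume "x \<in> carrier S" "y \<in> carrier S"
      then obtain a b where ab: "a \<in> carrier R" "b \<in> carrier R" "x = phi a" "y = phi b"
        unfolding S_def qring_def by auto
      have "x \<otimes>\<^bsub>S\<^esub> y = phi (a \<otimes> b)" using ring_hom_mult[OF hom ab(1,2)] ab by simp
      also have "\<dots> = phi (b \<otimes> a)" using ab m_comm by simp
      also have "\<dots> = y \<otimes>\<^bsub>S\<^esub> x" using ring_hom_mult[OF hom ab(2,1)] ab by simp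
      finally show "x \<otimes>\<^bsub>S\<^esub> y = y \<otimes>\<^bsub>S\<^esub> x" .
    qed
  qed
  have carQ: "carrier (R Quot I) = (\<Union>a\<in>carrier R. {I +> a})"
    unfolding FactRing_def A_RCOSETS_def' by simp
  have iso: "rep \<in> ring_iso (R Quot I) S"
  proof (rule ring_iso_memI)
    show "rep x \<in> carrier S" if "x \<in> carrier (R Quot I)" for x
      using that unfolding carQ S_def qring_def phi_def by auto
    show "rep (x \<otimes>\<^bsub>R Quot I\<^esub> y) = rep x \<otimes>\<^bsub>S\<^esub> rep y"
      if xq: "x \<in> carrier (R Quot I)" "y \<in> carrier (R Quot I)" for x y
    proof -
      obtain a b where ab: "a \<in> carrier R" "b \<in> carrier R" "x = I +> a" "y = I +> b"
        using xq unfolding carQ by auto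
      have "x \<otimes>\<^bsub>R Quot I\<^esub> y = I +> (a \<otimes> b)" using ring_hom_mult[OF rh ab(1,2)] ab by simp
      then have "rep (x \<otimes>\<^bsub>R Quot I\<^esub> y) = phi (a \<otimes> b)" unfolding phi_def by simp
      also have "\<dots> = phi a \<otimes>\<^bsub>S\<^esub> phi b" using ring_hom_mult[OF hom ab(1,2)] .
      finally show ?thesis using ab unfolding phi_def by simp
    qed
    show "rep (x \<oplus>\<^bsub>R Quot I\<^esub> y) = rep x \<oplus>\<^bsub>S\<^esub> rep y"
      if xq: "x \<in> carrier (R Quot I)" "y \<in> carrier (R Quot I)" for x y
    proof -
      obtain a b where ab: "a \<in> carrier R" "b \<in> carrier R" "x = I +> a" "y = I +> b"
        using xq unfolding carQ by auto
      have "x \<oplus>\<^bsub>R Quot I\<^esub> y = I +> (a \<oplus> b)" using ring_hom_add[OF rh ab(1,2)] ab by simp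
      then have "rep (x \<oplus>\<^bsub>R Quot I\<^esub> y) = phi (a \<oplus> b)" unfolding phi_def by simp
      also have "\<dots> = phi a \<oplus>\<^bsub>S\<^esub> phi b" using ring_hom_add[OF hom ab(1,2)] .
      finally show ?thesis using ab unfolding phi_def by simp
    qed
    show "rep \<one>\<^bsub>R Quot I\<^esub> = \<one>\<^bsub>S\<^esub>" unfolding FactRing_def S_def qring_def phi_def by simp
    show "bij_betw rep (carrier (R Quot I)) (carrier S)"
    proof (rule bij_betw_imageI)
      show "inj_on rep (carrier (R Quot I))"
      proof (rule inj_onI)
        fix x y assume "x \<in> carrier (R Quot I)" "y \<in> carrier (R Quot I)" "rep x = rep y"
        then obtain a b where ab: "a \<in> carrier R" "b \<in> carrier R" "x = I +> a" "y = I +> b"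
          "phi a = phi b"
          unfolding carQ phi_def by auto
        then show "x = y" using coseq by metis
      qed
      show "rep ` carrier (R Quot I) = carrier S"
        unfolding carQ S_def qring_def phi_def by auto
    qed
  qed
  show ?thesis
    by (rule that[OF iso hom crS]) (auto simp: S_def qring_def phi_def eqiff[unfolded phi_def])
qed

lemma hom_pow:
  assumes "h \<in> ring_hom R S" "monoid R" "x \<in> carrier R"
  shows "h (x [^]\<^bsub>R\<^esub> (n::nat)) = h x [^]\<^bsub>S\<^esub> n"
proof (induct n)
  case 0
  then show ?case using ring_hom_one[OF assms(1)] by simp
next
  case (Suc n)
  have "h (x [^]\<^bsub>R\<^esub> Suc n) = h (x [^]\<^bsub>R\<^esub> n \<otimes>\<^bsub>R\<^esub> x)" by simp
  also have "\<dots> = h (x [^]\<^bsub>R\<^esub> n) \<otimes>\<^bsub>S\<^esub> h x"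
    using ring_hom_mult[OF assms(1)] assms(3) monoid.nat_pow_closed[OF assms(2) assms(3)] by simp
  finally show ?case using Suc by simp
qed

lemma hom_addpow:
  assumes "h \<in> ring_hom R S" "ring R" "ring S" "x \<in> carrier R"
  shows "h (add_pow R (n::nat) x) = add_pow S n (h x)"
proof (induct n)
  case 0
  then show ?case using ring_hom_zero[OF assms(1-3)] by (simp add: add_pow_def)
next
  case (Suc n)
  interpret RR: ring R by (rule assms(2))
  have c: "add_pow R n x \<in> carrier R" using assms(4) by simp
  have "h (add_pow R (Suc n) x) = h (add_pow R n x \<oplus>\<^bsub>R\<^esub> x)" by (simp add: add_pow_def)
  also have "\<dots> = h (add_pow R n x) \<oplus>\<^bsub>S\<^esub> h x" using ring_hom_add[OF assms(1) c assms(4)] .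
  finally show ?case using Suc by (simp add: add_pow_def)
qed

lemma hom_unit:
  assumes "h \<in> ring_hom R S" "u \<in> Units R"
  shows "h u \<in> Units S"
proof -
  obtain v where v: "v \<in> carrier R" "v \<otimes>\<^bsub>R\<^esub> u = \<one>\<^bsub>R\<^esub>" "u \<otimes>\<^bsub>R\<^esub> v = \<one>\<^bsub>R\<^esub>" "u \<in> carrier R"
    using assms(2) unfolding Units_def by blast
  have "h v \<otimes>\<^bsub>S\<^esub> h u = \<one>\<^bsub>S\<^esub>" "h u \<otimes>\<^bsub>S\<^esub> h v = \<one>\<^bsub>S\<^esub>"
    using ring_hom_mult[OF assms(1) v(1) v(4)] ring_hom_mult[OF assms(1) v(4) v(1)] v(2,3)
      ring_hom_one[OF assms(1)] by simp_all
  moreover have "h v \<in> carrier S" "h u \<in> carrier S" using v ring_hom_closed[OF assms(1)] by auto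
  ultimately show ?thesis unfolding Units_def by blast
qed

lemma (in cring) pow_ge_zero:
  assumes "t \<in> carrier R" "t [^] (m::nat) = \<zero>" "m \<le> a"
  shows "t [^] a = \<zero>"
proof -
  obtain d where d: "a = m + d" using assms(3) le_Suc_ex by blast
  have "t [^] a = t [^] m \<otimes> t [^] d" using assms(1) by (simp only: d nat_pow_mult)
  then show ?thesis using assms by simp
qed

lemma (in cring) K_facts:
  assumes "subgroup K (units_of R)"
  shows "K \<subseteq> Units R" "\<one> \<in> K" "\<And>a b. a \<in> K \<Longrightarrow> b \<in> K \<Longrightarrow> a \<otimes> b \<in> K"
    "\<And>a. a \<in> K \<Longrightarrow> inv a \<in> K" "\<And>a. a \<in> K \<Longrightarrow> a [^] (n::nat) \<in> K"
proof -
  interpret G: subgroup K "units_of R" by fact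
  show KU: "K \<subseteq> Units R" using G.subset by (simp add: units_of_carrier)
  show one: "\<one> \<in> K" using G.one_closed by (simp add: units_of_one)
  show mult: "a \<otimes> b \<in> K" if "a \<in> K" "b \<in> K" for a b using G.m_closed[OF that] by (simp add: units_of_mult)
  show "inv a \<in> K" if "a \<in> K" for a
  proof -
    have "inv\<^bsub>units_of R\<^esub> a \<in> K" by (rule G.m_inv_closed[OF that])
    moreover have "a \<in> Units R" using KU that by blast
    ultimately show ?thesis using units_of_inv by simp
  qed
  show "a [^] n \<in> K" if "a \<in> K" for a
  proof (induct n)
    case 0 then show ?case using one by simp
  next
    case (Suc n) then show ?case using mult[OF Suc that] by simp
  qed
qed

lemma (in cring) pure_quot:
  fixes S :: "('c, 'd) ring_scheme" and phi :: "'a \<Rightarrow> 'c"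
  assumes t: "t \<in> carrier R" and tn: "t \<notin> Units R"
    and UM: "\<forall>x\<in>carrier R. x \<in> Units R \<or> (\<exists>y\<in>carrier R. x = t \<otimes> y)"
    and tp: "t = add_pow R (p::nat) \<one>" and two: "add_pow R (2::nat) \<one> \<in> Units R"
    and N: "t [^] N \<noteq> \<zero>" "t [^] Suc N = \<zero>" "N \<ge> 1"
    and pure: "pure R K"
    and hom: "phi \<in> ring_hom R S" and crS: "cring S" and carS: "carrier S = phi ` carrier R"
    and eqiff: "\<And>a b. a \<in> carrier R \<Longrightarrow> b \<in> carrier R \<Longrightarrow> phi a = phi b \<longleftrightarrow> a \<ominus> b \<in> PIdl (t [^] N)"
  shows "pure S (phi ` K)"
proof -
  interpret S: cring S by (rule crS)
  define I where "I = PIdl (t [^] N)"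
  have tN: "t [^] N \<in> carrier R" using t by simp
  have Iid: "ideal I R" unfolding I_def using cgenideal_ideal[OF tN] .
  have Isub: "I \<subseteq> carrier R" using Iid by (simp add: ideal.Icarr subsetI)
  have Imem: "x \<in> I \<longleftrightarrow> (\<exists>c\<in>carrier R. x = t [^] N \<otimes> c)" for x
    unfolding I_def using pidl_mem[OF tN] .
  obtain M where NM: "N = Suc M" using N(3) by (cases N) auto
  have tNM: "t [^] N = t \<otimes> t [^] M" using t by (simp add: NM m_comm)
  have I_t: "\<exists>y\<in>carrier R. x = t \<otimes> y" if "x \<in> I" for x
  proof -
    have "\<exists>c\<in>carrier R. x = t [^] N \<otimes> c" using that by (simp only: Imem)
    then obtain c where c: "c \<in> carrier R" "x = t [^] N \<otimes> c" by blast
    have "x = (t \<otimes> t [^] M) \<otimes> c" unfolding c(2) tNM ..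
    also have "\<dots> = t \<otimes> (t [^] M \<otimes> c)" using c t by (simp add: m_assoc)
    finally have "x = t \<otimes> (t [^] M \<otimes> c)" .
    moreover have "t [^] M \<otimes> c \<in> carrier R" using c t by simp
    ultimately show ?thesis by blast
  qed
  have I_ann: "t \<otimes> x = \<zero>" if "x \<in> I" for x
  proof -
    have "\<exists>c\<in>carrier R. x = t [^] N \<otimes> c" using that by (simp only: Imem)
    then obtain c where c: "c \<in> carrier R" "x = t [^] N \<otimes> c" by blast
    have "t \<otimes> x = (t \<otimes> t [^] N) \<otimes> c" unfolding c(2) using c t by (simp add: m_assoc)
    also have "t \<otimes> t [^] N = t [^] N \<otimes> t" using t by (simp add: m_comm)
    also have "\<dots> = \<zero>" using N(2) c t by simp
    also have "\<zero> \<otimes> c = \<zero>" using c by simp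
    finally show ?thesis .
  qed
  have I_sq: "x \<otimes> x = \<zero>" if xI: "x \<in> I" for x
  proof -
    obtain y where y: "y \<in> carrier R" "x = t \<otimes> y" using I_t[OF xI] by blast
    have xc: "x \<in> carrier R" using xI Isub by blast
    have "x \<otimes> x = (t \<otimes> x) \<otimes> y" using y xc t by (simp add: m_ac)
    then show ?thesis using I_ann[OF xI] y by simp
  qed
  have I_nu: "x \<notin> Units R" if "x \<in> I" for x
    using I_t[OF that] not_unit_mult[OF t tn] by blast
  have ringR: "ring R" using cring.axioms(1)[OF is_cring] .
  have ringS: "ring S" using cring.axioms(1)[OF crS] .
  have zS: "phi \<zero> = \<zero>\<^bsub>S\<^esub>" using ring_hom_zero[OF hom ringR ringS] .
  have oS: "phi \<one> = \<one>\<^bsub>S\<^esub>" using ring_hom_one[OF hom] .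
  have phic: "phi x \<in> carrier S" if "x \<in> carrier R" for x using ring_hom_closed[OF hom that] .
  have sgK: "subgroup K (units_of R)" using pure unfolding pure_def by blast
  note KF = K_facts[OF sgK]
  have Kc: "k \<in> carrier R" if "k \<in> K" for k using KF(1) that by blast
  have phiinv: "inv\<^bsub>S\<^esub> (phi k) = phi (inv k)" if "k \<in> K" for k
  proof -
    have ku: "k \<in> Units R" using KF(1) that by blast
    have "phi k \<otimes>\<^bsub>S\<^esub> phi (inv k) = phi (k \<otimes> inv k)"
      using ring_hom_mult[OF hom Units_closed[OF ku] Units_inv_closed[OF ku]] by (rule sym)
    also have "\<dots> = \<one>\<^bsub>S\<^esub>" using ku oS by simp
    finally have e: "phi k \<otimes>\<^bsub>S\<^esub> phi (inv k) = \<one>\<^bsub>S\<^esub>" .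
    have c1: "phi k \<in> carrier S" using phic ku by blast
    have c2: "phi (inv k) \<in> carrier S" using phic ku by blast
    show ?thesis by (rule S.comm_inv_char[OF c1 c2 e])
  qed
  have sub: "subgroup (phi ` K) (units_of S)"
  proof (rule group.subgroupI[OF S.units_group])
    show "phi ` K \<subseteq> carrier (units_of S)"
      using hom_unit[OF hom] KF(1) by (auto simp: units_of_carrier)
    show "phi ` K \<noteq> {}" using KF(2) by blast
    fix a assume "a \<in> phi ` K"
    then obtain k where k: "k \<in> K" "a = phi k" by blast
    have "a \<in> Units S" using hom_unit[OF hom] KF(1) k by blast
    then have "inv\<^bsub>units_of S\<^esub> a = inv\<^bsub>S\<^esub> a" by (rule S.units_of_inv)
    also have "\<dots> = phi (inv k)" using phiinv k by simp
    finally show "inv\<^bsub>units_of S\<^esub> a \<in> phi ` K" using KF(4) k by blast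
  next
    fix a b assume "a \<in> phi ` K" "b \<in> phi ` K"
    then obtain k l where kl: "k \<in> K" "l \<in> K" "a = phi k" "b = phi l" by blast
    have "a \<otimes>\<^bsub>units_of S\<^esub> b = phi (k \<otimes> l)"
      using kl ring_hom_mult[OF hom] Kc by (simp add: units_of_mult)
    then show "a \<otimes>\<^bsub>units_of S\<^esub> b \<in> phi ` K" using KF(3) kl by blast
  qed
  have purity: "J = {\<zero>\<^bsub>S\<^esub>}" if J: "ideal J S" and Jc: "\<forall>x\<in>J. \<one>\<^bsub>S\<^esub> \<oplus>\<^bsub>S\<^esub> x \<in> phi ` K" for J
  proof (rule ccontr)
    assume ne: "J \<noteq> {\<zero>\<^bsub>S\<^esub>}"
    have "\<zero>\<^bsub>S\<^esub> \<in> J" using additive_subgroup.zero_closed[OF ideal.axioms(1)[OF J]] .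
    then obtain j where j: "j \<in> J" "j \<noteq> \<zero>\<^bsub>S\<^esub>" using ne by blast
    have "j \<in> carrier S" using ideal.Icarr[OF J j(1)] .
    then have "j \<in> phi ` carrier R" by (simp only: carS)
    then obtain x0 where x0: "x0 \<in> carrier R" "j = phi x0" by blast
    have memJ: "phi (r \<otimes> x0) \<in> J" if "r \<in> carrier R" for r
    proof -
      have "phi (r \<otimes> x0) = phi r \<otimes>\<^bsub>S\<^esub> j" using ring_hom_mult[OF hom that x0(1)] x0 by simp
      then show ?thesis using ideal.I_l_closed[OF J j(1) phic[OF that]] by simp
    qed
    have keyK: "\<exists>\<kappa>\<in>K. (\<one> \<oplus> x) \<ominus> \<kappa> \<in> I" if x: "x \<in> carrier R" "phi x \<in> J" for x
    proof -
      obtain \<kappa> where k: "\<kappa> \<in> K" "\<one>\<^bsub>S\<^esub> \<oplus>\<^bsub>S\<^esub> phi x = phi \<kappa>" using Jc x(2) by blast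
      have "phi (\<one> \<oplus> x) = \<one>\<^bsub>S\<^esub> \<oplus>\<^bsub>S\<^esub> phi x" using ring_hom_add[OF hom one_closed x(1)] oS by simp
      then have "phi (\<one> \<oplus> x) = phi \<kappa>" using k by simp
      then have "(\<one> \<oplus> x) \<ominus> \<kappa> \<in> I" using eqiff[of "\<one> \<oplus> x" \<kappa>] x Kc[OF k(1)] unfolding I_def by simp
      then show ?thesis using k by blast
    qed
    have x0I: "x0 \<notin> I"
    proof
      assume "x0 \<in> I"
      then have "x0 \<ominus> \<zero> \<in> I" using x0 by (simp add: a_minus_def)
      then have "phi x0 = phi \<zero>" using eqiff[of x0 \<zero>] x0 unfolding I_def by simp
      then show False using j x0 zS by simp
    qed
    have "\<zero> \<in> I" using additive_subgroup.zero_closed[OF ideal.axioms(1)[OF Iid]] .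
    then have x0nz: "x0 \<noteq> \<zero>" using x0I by blast
    obtain k :: nat and u where ku: "u \<in> Units R" "x0 = t [^] k \<otimes> u"
      using decomp[OF t N(2) UM x0(1) x0nz] by blast
    have uc: "u \<in> carrier R" "inv u \<in> carrier R" "inv u \<otimes> u = \<one>" using ku(1) by auto
    show False
    proof (cases "k = 0")
      case True
      then have x0u: "x0 = u" using ku uc by simp
      have "(\<ominus> (inv u)) \<otimes> x0 = \<ominus> \<one>" using x0u uc by (simp add: l_minus)
      then have "phi (\<ominus> \<one>) \<in> J" using memJ[of "\<ominus> (inv u)"] uc by simp
      then obtain \<kappa> where k: "\<kappa> \<in> K" "(\<one> \<oplus> \<ominus> \<one>) \<ominus> \<kappa> \<in> I" using keyK[of "\<ominus> \<one>"] by auto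
      have kc: "\<kappa> \<in> carrier R" using Kc k(1) .
      have "(\<one> \<oplus> \<ominus> \<one>) \<ominus> \<kappa> = \<ominus> \<kappa>" using kc by algebra
      then have "\<ominus> \<kappa> \<in> I" using k by simp
      then have "\<ominus> (\<ominus> \<kappa>) \<in> I" using additive_subgroup.a_inv_closed[OF ideal.axioms(1)[OF Iid]] by blast
      then have "\<kappa> \<in> I" using kc by simp
      then show False using I_nu KF(1) k(1) by blast
    next
      case False
      have kN: "Suc k \<le> N"
      proof (rule ccontr)
        assume "\<not> Suc k \<le> N"
        then obtain d where d: "k = N + d" using le_Suc_ex[of N k] by auto
        have "x0 = (t [^] N \<otimes> t [^] d) \<otimes> u" using ku t by (simp add: d nat_pow_mult)
        also have "\<dots> = t [^] N \<otimes> (t [^] d \<otimes> u)" using t uc by (simp add: m_assoc)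
        finally have "x0 \<in> I" unfolding Imem using t uc by blast
        then show False using x0I by blast
      qed
      then have kM: "k \<le> M" using NM by simp
      then obtain d where d: "M = k + d" using le_Suc_ex by blast
      have M1: "M \<ge> 1" using False kM by simp
      have all: "\<one> \<oplus> y \<in> K" if yI: "y \<in> I" for y
      proof -
        have "\<exists>c\<in>carrier R. y = t [^] N \<otimes> c" using yI by (simp only: Imem)
        then obtain w where w: "w \<in> carrier R" "y = t [^] N \<otimes> w" by blast
        define x where "x = t [^] M \<otimes> w"
        have xc: "x \<in> carrier R" unfolding x_def using t w by simp
        have tM: "t [^] M = t [^] k \<otimes> t [^] d" using t by (simp add: d nat_pow_mult)
        have "(t [^] d \<otimes> w \<otimes> inv u) \<otimes> x0 = (t [^] d \<otimes> w \<otimes> inv u) \<otimes> (t [^] k \<otimes> u)"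
          using ku by simp
        also have "\<dots> = (t [^] k \<otimes> t [^] d) \<otimes> w \<otimes> (inv u \<otimes> u)"
        proof -
          have "t [^] d \<in> carrier R" "t [^] k \<in> carrier R" using t by simp_all
          then show ?thesis using w uc(1,2) by algebra
        qed
        also have "\<dots> = x" unfolding x_def tM using t w uc by simp
        finally have rx: "(t [^] d \<otimes> w \<otimes> inv u) \<otimes> x0 = x" .
        have "phi x \<in> J" using memJ[of "t [^] d \<otimes> w \<otimes> inv u"] t w uc rx by simp
        then obtain \<kappa> where k: "\<kappa> \<in> K" "(\<one> \<oplus> x) \<ominus> \<kappa> \<in> I" using keyK xc by blast
        define z' where "z' = (\<one> \<oplus> x) \<ominus> \<kappa>"
        have kU: "\<kappa> \<in> Units R" using KF(1) k(1) by blast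
        have kc: "\<kappa> \<in> carrier R" "inv \<kappa> \<in> carrier R" "\<kappa> \<otimes> inv \<kappa> = \<one>" using kU by auto
        have z'I: "z' \<in> I" using k(2) unfolding z'_def .
        have z'c: "z' \<in> carrier R" using z'I Isub by blast
        define z where "z = inv \<kappa> \<otimes> z'"
        have zI: "z \<in> I" unfolding z_def using ideal.I_l_closed[OF Iid z'I kc(2)] .
        have zc: "z \<in> carrier R" using zI Isub by blast
        have "\<kappa> \<otimes> (\<one> \<oplus> z) = \<kappa> \<oplus> (\<kappa> \<otimes> inv \<kappa>) \<otimes> z'"
          unfolding z_def using kc(1,2) z'c by algebra
        also have "(\<kappa> \<otimes> inv \<kappa>) \<otimes> z' = z'" by (simp only: kc(3) l_one z'c)
        also have "\<kappa> \<oplus> z' = \<one> \<oplus> x" unfolding z'_def using kc(1) xc by algebra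
        finally have e1: "\<one> \<oplus> x = \<kappa> \<otimes> (\<one> \<oplus> z)" by simp
        have zz: "z \<otimes> z = \<zero>" using I_sq[OF zI] .
        have pz: "(\<one> \<oplus> z) [^] p = \<one>"
        proof -
          have "(\<one> \<oplus> z) [^] p = \<one> \<oplus> t \<otimes> z"
            by (rule pow_p[OF zc _ tp two]) (use zz t zc in simp_all)
          then show ?thesis using I_ann[OF zI] by simp
        qed
        have tMM: "t [^] M \<otimes> t [^] M = t [^] (M + M)" using t by (simp add: nat_pow_mult)
        have xx: "x \<otimes> x = t [^] (M + M) \<otimes> (w \<otimes> w)"
        proof -
          have "x \<otimes> x = (t [^] M \<otimes> t [^] M) \<otimes> (w \<otimes> w)" unfolding x_def using t w by (simp add: m_ac)
          then show ?thesis using tMM by simp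
        qed
        have txx: "t \<otimes> (x \<otimes> x) = \<zero>"
        proof -
          have "t \<otimes> (x \<otimes> x) = (t [^] (M + M) \<otimes> t) \<otimes> (w \<otimes> w)" unfolding xx using t w by (simp add: m_ac)
          also have "t [^] (M + M) \<otimes> t = t [^] Suc (M + M)" by simp
          also have "\<dots> = \<zero>" by (rule pow_ge_zero[OF t N(2)]) (use NM M1 in simp)
          finally show ?thesis using w by simp
        qed
        have xxx: "x \<otimes> x \<otimes> x = \<zero>"
        proof -
          have c2: "t [^] (M + M) \<in> carrier R" "t [^] M \<in> carrier R" using t by simp_all
          have "x \<otimes> x \<otimes> x = (t [^] (M + M) \<otimes> (w \<otimes> w)) \<otimes> (t [^] M \<otimes> w)"
            unfolding xx by (simp add: x_def)
          also have "\<dots> = (t [^] (M + M) \<otimes> t [^] M) \<otimes> (w \<otimes> w \<otimes> w)" using c2 w by algebra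
          also have "t [^] (M + M) \<otimes> t [^] M = t [^] (M + M + M)" using t by (simp add: nat_pow_mult)
          also have "\<dots> = \<zero>" by (rule pow_ge_zero[OF t N(2)]) (use NM M1 in simp)
          finally show ?thesis using w by simp
        qed
        have tx: "t \<otimes> x = y"
        proof -
          have "t \<otimes> x = (t \<otimes> t [^] M) \<otimes> w" unfolding x_def using t w by (simp add: m_assoc)
          then show ?thesis using w tNM by simp
        qed
        have px: "(\<one> \<oplus> x) [^] p = \<one> \<oplus> y"
          using pow_p[OF xc xxx tp two txx] tx by simp
        have "(\<one> \<oplus> x) [^] p = \<kappa> [^] p \<otimes> (\<one> \<oplus> z) [^] p"
          unfolding e1 using kc zc by (simp add: nat_pow_distrib)
        also have "\<dots> = \<kappa> [^] p" using pz kc by simp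
        finally have "\<one> \<oplus> y = \<kappa> [^] p" using px by simp
        then show ?thesis using KF(5)[OF k(1)] by simp
      qed
      have "I = {\<zero>}" using pure Iid all unfolding pure_def by blast
      moreover have "t [^] N \<in> I" unfolding Imem using tN by (metis r_one one_closed)
      ultimately show False using N(1) by blast
    qed
  qed
  show ?thesis unfolding pure_def using sub purity by blast
qed

definition inv_ok :: "'a ring \<Rightarrow> 'a \<Rightarrow> nat \<Rightarrow> bool" where
  "inv_ok R t p \<longleftrightarrow> cring R \<and> finite (carrier R) \<and> \<one>\<^bsub>R\<^esub> \<noteq> \<zero>\<^bsub>R\<^esub> \<and> t = add_pow R p \<one>\<^bsub>R\<^esub>
     \<and> add_pow R (2::nat) \<one>\<^bsub>R\<^esub> \<in> Units R \<and> (\<exists>n::nat. t [^]\<^bsub>R\<^esub> n = \<zero>\<^bsub>R\<^esub>)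
     \<and> (\<forall>x\<in>carrier R. x \<in> Units R \<or> (\<exists>y\<in>carrier R. x = t \<otimes>\<^bsub>R\<^esub> y))"

lemma (in cring) pidl_pow_t:
  assumes t: "t \<in> carrier R" and N: "(N::nat) \<ge> 1" and x: "x \<in> PIdl (t [^] N)"
  shows "\<exists>y\<in>carrier R. x = t \<otimes> y"
proof -
  have tN: "t [^] N \<in> carrier R" using t by simp
  have "\<exists>c\<in>carrier R. x = t [^] N \<otimes> c" using x by (simp only: pidl_mem[OF tN])
  then obtain c where c: "c \<in> carrier R" "x = t [^] N \<otimes> c" by blast
  obtain M where NM: "N = Suc M" using N by (cases N) auto
  have tNM: "t [^] N = t \<otimes> t [^] M" using t by (simp add: NM m_comm)
  have "x = (t \<otimes> t [^] M) \<otimes> c" unfolding c(2) tNM ..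
  also have "\<dots> = t \<otimes> (t [^] M \<otimes> c)" using c t by (simp add: m_assoc)
  finally have "x = t \<otimes> (t [^] M \<otimes> c)" .
  moreover have "t [^] M \<otimes> c \<in> carrier R" using c t by simp
  ultimately show ?thesis by blast
qed

lemma main_ind:
  fixes R :: "'a ring"
  assumes "inv_ok R t p" "pure R K"
  shows "strongly_pure R K"
  using assms
proof (induct "card (carrier R)" arbitrary: R t K rule: less_induct)
  case less
  have ok: "cring R" "finite (carrier R)" "\<one>\<^bsub>R\<^esub> \<noteq> \<zero>\<^bsub>R\<^esub>" "t = add_pow R p \<one>\<^bsub>R\<^esub>"
    "add_pow R (2::nat) \<one>\<^bsub>R\<^esub> \<in> Units R" "\<exists>n::nat. t [^]\<^bsub>R\<^esub> n = \<zero>\<^bsub>R\<^esub>"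
    "\<forall>x\<in>carrier R. x \<in> Units R \<or> (\<exists>y\<in>carrier R. x = t \<otimes>\<^bsub>R\<^esub> y)"
    using less.prems(1) unfolding inv_ok_def by blast+
  interpret R: cring R by (rule ok(1))
  have tc: "t \<in> carrier R" using ok(4) by simp
  obtain n :: nat where nil: "t [^]\<^bsub>R\<^esub> n = \<zero>\<^bsub>R\<^esub>" using ok(6) by blast
  have tn: "t \<notin> Units R" using R.nilp_not_unit[OF tc nil ok(3)] .
  show ?case
  proof (cases "t = \<zero>\<^bsub>R\<^esub>")
    case True
    have "Units R = carrier R - {\<zero>\<^bsub>R\<^esub>}"
    proof
      show "Units R \<subseteq> carrier R - {\<zero>\<^bsub>R\<^esub>}"
      proof
        fix x assume x: "x \<in> Units R"
        have "x \<noteq> \<zero>\<^bsub>R\<^esub>"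
        proof
          assume "x = \<zero>\<^bsub>R\<^esub>"
          then obtain y where "y \<in> carrier R" "\<zero>\<^bsub>R\<^esub> \<otimes>\<^bsub>R\<^esub> y = \<one>\<^bsub>R\<^esub>" using x unfolding Units_def by blast
          then show False using ok(3) by simp
        qed
        then show "x \<in> carrier R - {\<zero>\<^bsub>R\<^esub>}" using x by blast
      qed
      show "carrier R - {\<zero>\<^bsub>R\<^esub>} \<subseteq> Units R"
      proof
        fix x assume x: "x \<in> carrier R - {\<zero>\<^bsub>R\<^esub>}"
        show "x \<in> Units R"
        proof (rule ccontr)
          assume "x \<notin> Units R"
          then obtain y where "y \<in> carrier R" "x = t \<otimes>\<^bsub>R\<^esub> y" using ok(7) x by blast
          then show False using True x by simp
        qed
      qed
    qed
    then have "field R" by (rule R.cring_fieldI)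
    then show ?thesis by (rule sp_field[OF less.prems(2)])
  next
    case False
    have nf: "\<not> field R"
    proof
      assume "field R"
      then have "Units R = carrier R - {\<zero>\<^bsub>R\<^esub>}" by (rule field.field_Units)
      then show False using tn tc False by blast
    qed
    define n0 where "n0 = (LEAST n::nat. t [^]\<^bsub>R\<^esub> n = \<zero>\<^bsub>R\<^esub>)"
    have n0z: "t [^]\<^bsub>R\<^esub> n0 = \<zero>\<^bsub>R\<^esub>" unfolding n0_def using nil by (rule LeastI)
    have n0ne0: "n0 \<noteq> 0" using n0z ok(3) by (cases n0) auto
    have n0ne1: "n0 \<noteq> 1" using n0z False tc by auto
    define N where "N = n0 - 1"
    have N1: "N \<ge> 1" unfolding N_def using n0ne0 n0ne1 by simp
    have NS: "Suc N = n0" unfolding N_def using n0ne0 by simp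
    have tSN: "t [^]\<^bsub>R\<^esub> Suc N = \<zero>\<^bsub>R\<^esub>" using n0z NS by simp
    have tN: "t [^]\<^bsub>R\<^esub> N \<noteq> \<zero>\<^bsub>R\<^esub>"
    proof
      assume "t [^]\<^bsub>R\<^esub> N = \<zero>\<^bsub>R\<^esub>"
      then have "n0 \<le> N" unfolding n0_def by (rule Least_le)
      then show False using NS by simp
    qed
    have tNc: "t [^]\<^bsub>R\<^esub> N \<in> carrier R" using tc by simp
    have I0eq: "I0 R = PIdl\<^bsub>R\<^esub> (t [^]\<^bsub>R\<^esub> N)" using R.I0_struct[OF tc tn ok(7) tN tSN N1] .
    have Iid: "ideal (I0 R) R" unfolding I0eq using R.cgenideal_ideal[OF tNc] .
    obtain S :: "'a ring" and phi where Q: "rep \<in> ring_iso (R Quot I0 R) S" "phi \<in> ring_hom R S" "cring S"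
      "carrier S = phi ` carrier R"
      "\<And>a. a \<in> carrier R \<Longrightarrow> rep (I0 R +>\<^bsub>R\<^esub> a) = phi a"
      "\<And>a b. a \<in> carrier R \<Longrightarrow> b \<in> carrier R \<Longrightarrow> phi a = phi b \<longleftrightarrow> a \<ominus>\<^bsub>R\<^esub> b \<in> I0 R"
      by (rule R.quot_copy[OF Iid]) blast
    have eqiff: "phi a = phi b \<longleftrightarrow> a \<ominus>\<^bsub>R\<^esub> b \<in> PIdl\<^bsub>R\<^esub> (t [^]\<^bsub>R\<^esub> N)"
      if "a \<in> carrier R" "b \<in> carrier R" for a b using Q(6)[OF that] unfolding I0eq .
    have pS: "pure S (phi ` K)"
      using R.pure_quot[OF tc tn ok(7) ok(4) ok(5) tN tSN N1 less.prems(2) Q(2) Q(3) Q(4) eqiff] .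
    have KU: "K \<subseteq> carrier R" using R.K_facts(1) less.prems(2) unfolding pure_def by blast
    have img: "rep ` pi0_image R K = phi ` K"
    proof -
      have "rep ` pi0_image R K = (\<lambda>k. rep (I0 R +>\<^bsub>R\<^esub> k)) ` K"
        unfolding pi0_image_def by (simp add: image_image)
      also have "\<dots> = phi ` K" using Q(5) KU by (intro image_cong) auto
      finally show ?thesis .
    qed
    have ringR: "ring R" using cring.axioms(1)[OF ok(1)] .
    have ringS: "ring S" using cring.axioms(1)[OF Q(3)] .
    have zS: "phi \<zero>\<^bsub>R\<^esub> = \<zero>\<^bsub>S\<^esub>" using ring_hom_zero[OF Q(2) ringR ringS] .
    have oS: "phi \<one>\<^bsub>R\<^esub> = \<one>\<^bsub>S\<^esub>" using ring_hom_one[OF Q(2)] .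
    have okS: "inv_ok S (phi t) p"
      unfolding inv_ok_def
    proof (intro conjI)
      show "cring S" by (rule Q(3))
      show "finite (carrier S)" using Q(4) ok(2) by simp
      show "\<one>\<^bsub>S\<^esub> \<noteq> \<zero>\<^bsub>S\<^esub>"
      proof
        assume "\<one>\<^bsub>S\<^esub> = \<zero>\<^bsub>S\<^esub>"
        then have "phi \<one>\<^bsub>R\<^esub> = phi \<zero>\<^bsub>R\<^esub>" using zS oS by simp
        then have "\<one>\<^bsub>R\<^esub> \<ominus>\<^bsub>R\<^esub> \<zero>\<^bsub>R\<^esub> \<in> PIdl\<^bsub>R\<^esub> (t [^]\<^bsub>R\<^esub> N)" using eqiff by simp
        then have "\<one>\<^bsub>R\<^esub> \<in> PIdl\<^bsub>R\<^esub> (t [^]\<^bsub>R\<^esub> N)" by (simp add: a_minus_def)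
        then obtain y where "y \<in> carrier R" "\<one>\<^bsub>R\<^esub> = t \<otimes>\<^bsub>R\<^esub> y" using R.pidl_pow_t[OF tc N1] by blast
        then show False using R.one_not_tmult[OF tc tn] by blast
      qed
      show "phi t = add_pow S p \<one>\<^bsub>S\<^esub>"
        using hom_addpow[OF Q(2) ringR ringS R.one_closed, of p] ok(4) oS by simp
      have "phi (add_pow R (2::nat) \<one>\<^bsub>R\<^esub>) = add_pow S (2::nat) \<one>\<^bsub>S\<^esub>"
        using hom_addpow[OF Q(2) ringR ringS R.one_closed, of 2] oS by simp
      then show "add_pow S (2::nat) \<one>\<^bsub>S\<^esub> \<in> Units S" using hom_unit[OF Q(2) ok(5)] by simp
      have "phi t [^]\<^bsub>S\<^esub> n = \<zero>\<^bsub>S\<^esub>"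
        using hom_pow[OF Q(2) R.is_monoid tc, of n] nil zS by simp
      then show "\<exists>n::nat. phi t [^]\<^bsub>S\<^esub> n = \<zero>\<^bsub>S\<^esub>" by blast
      show "\<forall>x\<in>carrier S. x \<in> Units S \<or> (\<exists>y\<in>carrier S. x = phi t \<otimes>\<^bsub>S\<^esub> y)"
      proof
        fix x assume "x \<in> carrier S"
        then have "x \<in> phi ` carrier R" by (simp only: Q(4))
        then obtain a where a: "a \<in> carrier R" "x = phi a" by blast
        show "x \<in> Units S \<or> (\<exists>y\<in>carrier S. x = phi t \<otimes>\<^bsub>S\<^esub> y)"
        proof (cases "a \<in> Units R")
          case True then show ?thesis using hom_unit[OF Q(2)] a by blast
        next
          case False
          then obtain y where y: "y \<in> carrier R" "a = t \<otimes>\<^bsub>R\<^esub> y" using ok(7) a by blast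
          have "x = phi t \<otimes>\<^bsub>S\<^esub> phi y" using a y ring_hom_mult[OF Q(2) tc y(1)] by simp
          moreover have "phi y \<in> carrier S" using ring_hom_closed[OF Q(2) y(1)] .
          ultimately show ?thesis by blast
        qed
      qed
    qed
    have card: "card (carrier S) < card (carrier R)"
    proof -
      have "t [^]\<^bsub>R\<^esub> N \<ominus>\<^bsub>R\<^esub> \<zero>\<^bsub>R\<^esub> = t [^]\<^bsub>R\<^esub> N \<otimes>\<^bsub>R\<^esub> \<one>\<^bsub>R\<^esub>" using tNc by (simp add: a_minus_def)
      then have "t [^]\<^bsub>R\<^esub> N \<ominus>\<^bsub>R\<^esub> \<zero>\<^bsub>R\<^esub> \<in> PIdl\<^bsub>R\<^esub> (t [^]\<^bsub>R\<^esub> N)"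
        unfolding R.pidl_mem[OF tNc] by blast
      then have "phi (t [^]\<^bsub>R\<^esub> N) = phi \<zero>\<^bsub>R\<^esub>" using eqiff tNc by simp
      then have "\<not> inj_on phi (carrier R)" using tN tNc unfolding inj_on_def by blast
      then have "card (phi ` carrier R) \<noteq> card (carrier R)" using inj_on_iff_eq_card[OF ok(2)] by blast
      moreover have "card (phi ` carrier R) \<le> card (carrier R)" using card_image_le[OF ok(2)] .
      ultimately show ?thesis using Q(4) by simp
    qed
    have "strongly_pure S (phi ` K)" using less.hyps[OF card okS pS] .
    then have "strongly_pure S (rep ` pi0_image R K)" using img by simp
    then show ?thesis by (rule sp_step[OF less.prems(2) nf Q(1)])
  qed
qed

lemma (in cring) nilpotent_from_finite:
  assumes fin: "finite (carrier R)" and t: "t \<in> carrier R" and tn: "t \<notin> Units R"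
    and UM: "\<forall>x\<in>carrier R. x \<in> Units R \<or> (\<exists>y\<in>carrier R. x = t \<otimes> y)"
  shows "\<exists>n::nat. t [^] n = \<zero>"
proof -
  have "range (\<lambda>n::nat. t [^] n) \<subseteq> carrier R" using t by auto
  then have fr: "finite (range (\<lambda>n::nat. t [^] n))" using fin by (rule finite_subset)
  have "\<not> inj (\<lambda>n::nat. t [^] n)"
  proof
    assume "inj (\<lambda>n::nat. t [^] n)"
    then have "finite (UNIV :: nat set)" using finite_imageD[OF fr] by blast
    then show False by simp
  qed
  then obtain a b :: nat where ab: "a \<noteq> b" "t [^] a = t [^] b" unfolding inj_def by blast
  define a' where "a' = min a b"
  define b' where "b' = max a b"
  have ab'1: "a' < b'" unfolding a'_def b'_def using ab(1) by simp
  have ab'2: "t [^] a' = t [^] b'"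
  proof (cases "a < b")
    case True
    then have "a' = a" "b' = b" unfolding a'_def b'_def by simp_all
    then show ?thesis using ab(2) by simp
  next
    case False
    then have "a' = b" "b' = a" unfolding a'_def b'_def by simp_all
    then show ?thesis using ab(2) by simp
  qed
  note ab' = ab'1 ab'2
  obtain d where d0: "b' = Suc (a' + d)" using less_imp_Suc_add[OF ab'(1)] by blast
  have d: "b' = a' + Suc d" using d0 by simp
  have ta: "t [^] a' \<in> carrier R" "t [^] Suc d \<in> carrier R" using t by simp_all
  have "t [^] a' \<otimes> t [^] Suc d = t [^] (a' + Suc d)" by (rule nat_pow_mult[OF t])
  also have "\<dots> = t [^] b'" by (simp only: d)
  also have "\<dots> = t [^] a'" by (rule ab'(2)[symmetric])
  finally have h: "t [^] a' \<otimes> t [^] Suc d = t [^] a'" .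
  have e: "(\<one> \<ominus> t [^] Suc d) \<otimes> t [^] a' = \<zero>"
  proof -
    have "(\<one> \<ominus> t [^] Suc d) \<otimes> t [^] a' = t [^] a' \<ominus> t [^] a' \<otimes> t [^] Suc d"
      using ta by algebra
    also have "\<dots> = t [^] a' \<ominus> t [^] a'" by (simp only: h)
    also have "\<dots> = \<zero>" unfolding a_minus_def by (rule r_neg[OF ta(1)])
    finally show ?thesis .
  qed
  have u: "\<one> \<ominus> t [^] Suc d \<in> Units R"
  proof (rule ccontr)
    assume "\<one> \<ominus> t [^] Suc d \<notin> Units R"
    moreover have "\<one> \<ominus> t [^] Suc d \<in> carrier R" using ta by simp
    ultimately obtain y where y: "y \<in> carrier R" "\<one> \<ominus> t [^] Suc d = t \<otimes> y" using UM by blast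
    have td: "t [^] d \<in> carrier R" using t by simp
    have "\<one> = (\<one> \<ominus> t [^] Suc d) \<oplus> t [^] Suc d" using ta by algebra
    also have "\<dots> = t \<otimes> y \<oplus> t [^] d \<otimes> t" unfolding y(2) by (simp only: nat_pow_Suc)
    also have "\<dots> = t \<otimes> (y \<oplus> t [^] d)" using t y(1) td by algebra
    finally have "\<one> = t \<otimes> (y \<oplus> t [^] d)" .
    moreover have "\<one> \<noteq> t \<otimes> (y \<oplus> t [^] d)" by (rule one_not_tmult[OF t tn]) (use y(1) td in simp)
    ultimately show False by blast
  qed
  have "t [^] a' = \<zero>" using unit_cancel_zero[OF u ta(1) e] .
  then show ?thesis by blast
qed

lemma (in cring) local_nonunit:
  assumes fin: "finite (carrier R)" and M: "maximalideal M R"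
    and uniq: "\<And>J. maximalideal J R \<Longrightarrow> J = M"
    and x: "x \<in> carrier R" "x \<notin> Units R"
  shows "x \<in> M"
proof -
  have idx: "ideal (PIdl x) R" using cgenideal_ideal[OF x(1)] .
  have one: "\<one> \<notin> PIdl x"
  proof
    assume "\<one> \<in> PIdl x"
    then obtain y where y: "y \<in> carrier R" "\<one> = y \<otimes> x" unfolding cgenideal_def by blast
    have yx: "y \<otimes> x = \<one>" using y(2) by (rule sym)
    have xy: "x \<otimes> y = \<one>" using m_comm[OF x(1) y(1)] yx by (rule trans)
    have "x \<in> Units R" unfolding Units_def using x(1) y(1) xy yx by blast
    then show False using x(2) by blast
  qed
  define F where "F = {J. ideal J R \<and> PIdl x \<subseteq> J \<and> J \<noteq> carrier R}"
  have "F \<subseteq> Pow (carrier R)"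
  proof
    fix J assume "J \<in> F"
    then have "ideal J R" unfolding F_def by blast
    then have "J \<subseteq> carrier R" using ideal.Icarr by (metis subsetI)
    then show "J \<in> Pow (carrier R)" by simp
  qed
  moreover have "finite (Pow (carrier R))" using fin by simp
  ultimately have finF: "finite F" by (rule finite_subset)
  have "PIdl x \<noteq> carrier R" using one one_closed by blast
  then have "PIdl x \<in> F" unfolding F_def using idx by blast
  then have "F \<noteq> {}" by blast
  then obtain m where m: "m \<in> F" "\<forall>b\<in>F. m \<le> b \<longrightarrow> m = b" using finite_has_maximal[OF finF] by blast
  have mF: "ideal m R" "PIdl x \<subseteq> m" "m \<noteq> carrier R" using m(1) unfolding F_def by blast+
  have "maximalideal m R"
  proof (rule maximalidealI[OF mF(1)])
    show "carrier R \<noteq> m" using mF(3) by blast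
    fix J assume J: "ideal J R" "m \<subseteq> J" "J \<subseteq> carrier R"
    show "J = m \<or> J = carrier R"
    proof (cases "J = carrier R")
      case False
      then have "J \<in> F" unfolding F_def using J mF(2) by blast
      then show ?thesis using m(2) J(2) by blast
    qed simp
  qed
  then have "m = M" using uniq by blast
  moreover have "x \<in> PIdl x"
  proof -
    have "x = \<one> \<otimes> x" using x(1) by simp
    then show ?thesis unfolding cgenideal_def using one_closed by blast
  qed
  ultimately show ?thesis using mF(2) by blast
qed

lemma galois_inv_ok:
  fixes R :: "'a ring"
  assumes G: "galois_ring R" and odd: "odd (alg_ring_char R)"
  shows "inv_ok R (add_pow R (residue_char R) \<one>\<^bsub>R\<^esub>) (residue_char R)"
proof -
  define p where "p = residue_char R"
  define t where "t = add_pow R p \<one>\<^bsub>R\<^esub>"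
  have cr: "cring R" and fin: "finite (carrier R)" and ex1: "\<exists>!I. maximalideal I R"
    and radeq: "rad R = {add_pow R p x | x. x \<in> carrier R}"
    using G unfolding galois_ring_def finite_local_cring_def p_def by blast+
  interpret R: cring R by (rule cr)
  obtain M where M: "maximalideal M R" using ex1 by blast
  have uniq: "J = M" if "maximalideal J R" for J using ex1 M that by blast
  interpret MI: maximalideal M R by (rule M)
  have tc: "t \<in> carrier R" unfolding t_def by simp
  have one0: "\<one>\<^bsub>R\<^esub> \<noteq> \<zero>\<^bsub>R\<^esub>"
  proof
    assume h: "\<one>\<^bsub>R\<^esub> = \<zero>\<^bsub>R\<^esub>"
    have "\<zero>\<^bsub>R\<^esub> \<in> M" by (rule additive_subgroup.zero_closed[OF ideal.axioms(1)[OF MI.is_ideal]])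
    then have "\<one>\<^bsub>R\<^esub> \<in> M" using h by simp
    then have "M = carrier R" by (rule MI.one_imp_carrier)
    then show False using MI.I_notcarr by simp
  qed
  have radM: "rad R = M"
  proof
    show "rad R \<subseteq> M" unfolding rad_def using M by blast
    show "M \<subseteq> rad R" unfolding rad_def using uniq MI.Icarr by blast
  qed
  have radt: "rad R = {t \<otimes>\<^bsub>R\<^esub> y | y. y \<in> carrier R}"
  proof -
    have "add_pow R p x = t \<otimes>\<^bsub>R\<^esub> x" if "x \<in> carrier R" for x
      unfolding t_def using R.add_pow_ldistr[OF R.one_closed that, of p] that by simp
    then show ?thesis unfolding radeq by force
  qed
  have UM: "\<forall>x\<in>carrier R. x \<in> Units R \<or> (\<exists>y\<in>carrier R. x = t \<otimes>\<^bsub>R\<^esub> y)"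
  proof
    fix x assume x: "x \<in> carrier R"
    show "x \<in> Units R \<or> (\<exists>y\<in>carrier R. x = t \<otimes>\<^bsub>R\<^esub> y)"
    proof (cases "x \<in> Units R")
      case False
      then have "x \<in> M" using R.local_nonunit[OF fin M uniq x] by blast
      then have "x \<in> rad R" using radM by simp
      then show ?thesis unfolding radt by blast
    qed simp
  qed
  have tM: "t \<in> M"
  proof -
    have "t = t \<otimes>\<^bsub>R\<^esub> \<one>\<^bsub>R\<^esub>" using tc by simp
    then have "t \<in> rad R" unfolding radt by blast
    then show ?thesis using radM by simp
  qed
  have tn: "t \<notin> Units R"
  proof
    assume "t \<in> Units R"
    then have "M = carrier R" using R.unit_ideal[OF MI.is_ideal tM] by blast
    then show False using MI.I_notcarr by simp
  qed
  have nil: "\<exists>n::nat. t [^]\<^bsub>R\<^esub> n = \<zero>\<^bsub>R\<^esub>" using R.nilpotent_from_finite[OF fin tc tn UM] .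
  define c where "c = alg_ring_char R"
  have c0: "c \<noteq> 0" using odd_pos[OF odd] unfolding c_def by simp
  have exn: "\<exists>n::nat>0. add_pow R n \<one>\<^bsub>R\<^esub> = \<zero>\<^bsub>R\<^esub>"
  proof (rule ccontr)
    assume h: "\<not> ?thesis"
    have "c = 0" unfolding c_def alg_ring_char_def by (rule if_not_P[OF h])
    then show False using c0 by simp
  qed
  have cdef: "c = (LEAST n::nat. n > 0 \<and> add_pow R n \<one>\<^bsub>R\<^esub> = \<zero>\<^bsub>R\<^esub>)"
    unfolding c_def alg_ring_char_def using exn by simp
  have cz: "add_pow R c \<one>\<^bsub>R\<^esub> = \<zero>\<^bsub>R\<^esub>"
    unfolding cdef using LeastI_ex[OF exn] by blast
  have oddc: "odd c" using odd unfolding c_def .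
  have two: "add_pow R (2::nat) \<one>\<^bsub>R\<^esub> \<in> Units R"
  proof -
    define h where "h = (c + 1) div 2"
    have h2: "2 * h = c + 1" unfolding h_def using oddc by simp
    have "add_pow R (2::nat) \<one>\<^bsub>R\<^esub> \<otimes>\<^bsub>R\<^esub> add_pow R h \<one>\<^bsub>R\<^esub> = add_pow R (2 * h) \<one>\<^bsub>R\<^esub>"
      by (rule R.addpow_one_mult)
    also have "\<dots> = add_pow R c \<one>\<^bsub>R\<^esub> \<oplus>\<^bsub>R\<^esub> add_pow R (1::nat) \<one>\<^bsub>R\<^esub>"
      unfolding h2 by (simp add: R.add.nat_pow_mult)
    also have "\<dots> = \<one>\<^bsub>R\<^esub>" using cz by simp
    finally have e: "add_pow R (2::nat) \<one>\<^bsub>R\<^esub> \<otimes>\<^bsub>R\<^esub> add_pow R h \<one>\<^bsub>R\<^esub> = \<one>\<^bsub>R\<^esub>" .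
    have c1: "add_pow R (2::nat) \<one>\<^bsub>R\<^esub> \<in> carrier R" "add_pow R h \<one>\<^bsub>R\<^esub> \<in> carrier R" by simp_all
    have e2: "add_pow R h \<one>\<^bsub>R\<^esub> \<otimes>\<^bsub>R\<^esub> add_pow R (2::nat) \<one>\<^bsub>R\<^esub> = \<one>\<^bsub>R\<^esub>"
      using e R.m_comm[OF c1] by simp
    show ?thesis unfolding Units_def using c1 e e2 by blast
  qed
  show ?thesis
    unfolding inv_ok_def p_def[symmetric] t_def[symmetric]
    using cr fin one0 two nil UM by (simp add: t_def)
qed

theorem theorem6p6:
  fixes R :: "'a ring" and K :: "'a set"
  assumes "galois_ring R"
    and "odd (alg_ring_char R)"
    and "pure R K"
  shows "strongly_pure R K"
  using main_ind[OF galois_inv_ok[OF assms(1,2)] assms(3)] .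

end
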